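(* Let $\mathbf{P_0},\mathbf{P_1}$ be $n\times n$ transition probability matrices of irreducible and aperiodic Markov chains on $n$ states, let $\mathbf{P_t}=(1-t)\mathbf{P_0}+t\mathbf{P_1}$ for $t\in[0,1]$, and let $\pi_1$ be the stationary distribution of $\mathbf{P_1}$. Then for every $\epsilon>0$, $$t_{ad}(\mathbf{P_0},\mathbf{P_1},\epsilon)\le\frac{2\,t_{mix}^2(\mathbf{P_1},\epsilon/2)}{\epsilon}.$$
   Context: Distributions are row vectors; $\|\mu-\nu\|_{TV}=\frac12\|\mu-\nu\|_1$. For an irreducible aperiodic transition matrix $\mathbf{P}$ with stationary distribution $\pi$, $t_{mix}(\mathbf{P},\epsilon)=\inf\{T\in\mathbb{N}: \|\nu\mathbf{P}^T-\pi\|_{TV}\le\epsilon \text{ for all distributions }\nu\}$. The adiabatic time is $$t_{ad}(\mathbf{P_0},\mathbf{P_1},\epsilon)=\inf\{T^*\in\mathbb{N}: \max_\nu\|\nu\mathbf{P_0}\mathbf{P_{1/T}}\mathbf{P_{2/T}}\cdots\mathbf{P_1}-\pi_1\|_{TV}\le\epsilon \text{ for all } T\in\mathbb{N},\,T\ge T^*\},$$ the maximum being over all probability distributions $\nu$ and the product being $\mathbf{P_{0/T}}\mathbf{P_{1/T}}\cdots\mathbf{P_{T/T}}$. *)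

theory Defs
  imports Complex_Main
begin

text \<open>Matrices are functions 'n \<Rightarrow> 'n \<Rightarrow> real (row i, column j);
  distributions are row vectors 'n \<Rightarrow> real.\<close>

definition stochastic :: "('n::finite \<Rightarrow> 'n \<Rightarrow> real) \<Rightarrow> bool" where
  "stochastic P \<longleftrightarrow> (\<forall>i j. 0 \<le> P i j) \<and> (\<forall>i. (\<Sum>j\<in>UNIV. P i j) = 1)"

definition distribution :: "('n::finite \<Rightarrow> real) \<Rightarrow> bool" where
  "distribution \<nu> \<longleftrightarrow> (\<forall>i. 0 \<le> \<nu> i) \<and> (\<Sum>i\<in>UNIV. \<nu> i) = 1"

definition matmul :: "('n::finite \<Rightarrow> 'n \<Rightarrow> real) \<Rightarrow> ('n \<Rightarrow> 'n \<Rightarrow> real) \<Rightarrow> 'n \<Rightarrow> 'n \<Rightarrow> real" where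
  "matmul A B = (\<lambda>i k. \<Sum>j\<in>UNIV. A i j * B j k)"

fun matpow :: "('n::finite \<Rightarrow> 'n \<Rightarrow> real) \<Rightarrow> nat \<Rightarrow> 'n \<Rightarrow> 'n \<Rightarrow> real" where
  "matpow P 0 = (\<lambda>i j. if i = j then 1 else 0)"
| "matpow P (Suc k) = matmul (matpow P k) P"

definition vecmat :: "('n::finite \<Rightarrow> real) \<Rightarrow> ('n \<Rightarrow> 'n \<Rightarrow> real) \<Rightarrow> 'n \<Rightarrow> real" where
  "vecmat \<nu> P = (\<lambda>j. \<Sum>i\<in>UNIV. \<nu> i * P i j)"

definition tv_dist :: "('n::finite \<Rightarrow> real) \<Rightarrow> ('n \<Rightarrow> real) \<Rightarrow> real" where
  "tv_dist \<mu> \<nu> = (1/2) * (\<Sum>i\<in>UNIV. \<bar>\<mu> i - \<nu> i\<bar>)"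

definition irreducible_chain :: "('n::finite \<Rightarrow> 'n \<Rightarrow> real) \<Rightarrow> bool" where
  "irreducible_chain P \<longleftrightarrow> (\<forall>i j. \<exists>k. 0 < matpow P k i j)"

definition aperiodic_chain :: "('n::finite \<Rightarrow> 'n \<Rightarrow> real) \<Rightarrow> bool" where
  "aperiodic_chain P \<longleftrightarrow> (\<forall>i. Gcd {k. 1 \<le> k \<and> 0 < matpow P k i i} = 1)"

definition stationary :: "('n::finite \<Rightarrow> 'n \<Rightarrow> real) \<Rightarrow> ('n \<Rightarrow> real) \<Rightarrow> bool" where
  "stationary P \<pi> \<longleftrightarrow> distribution \<pi> \<and> vecmat \<pi> P = \<pi>"

definition t_mix :: "('n::finite \<Rightarrow> 'n \<Rightarrow> real) \<Rightarrow> ('n \<Rightarrow> real) \<Rightarrow> real \<Rightarrow> nat" where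
  "t_mix P \<pi> \<epsilon> = Inf {T. \<forall>\<nu>. distribution \<nu> \<longrightarrow> tv_dist (vecmat \<nu> (matpow P T)) \<pi> \<le> \<epsilon>}"

definition interp :: "('n::finite \<Rightarrow> 'n \<Rightarrow> real) \<Rightarrow> ('n \<Rightarrow> 'n \<Rightarrow> real) \<Rightarrow> real \<Rightarrow> 'n \<Rightarrow> 'n \<Rightarrow> real" where
  "interp P0 P1 t = (\<lambda>i j. (1 - t) * P0 i j + t * P1 i j)"

definition adiabatic_evol :: "('n::finite \<Rightarrow> 'n \<Rightarrow> real) \<Rightarrow> ('n \<Rightarrow> 'n \<Rightarrow> real) \<Rightarrow> nat \<Rightarrow> ('n \<Rightarrow> real) \<Rightarrow> 'n \<Rightarrow> real" where
  "adiabatic_evol P0 P1 T \<nu> = foldl (\<lambda>\<mu> i. vecmat \<mu> (interp P0 P1 (real i / real T))) \<nu> [0..<Suc T]"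

definition adiabatic_set :: "('n::finite \<Rightarrow> 'n \<Rightarrow> real) \<Rightarrow> ('n \<Rightarrow> 'n \<Rightarrow> real) \<Rightarrow> ('n \<Rightarrow> real) \<Rightarrow> real \<Rightarrow> nat set" where
  "adiabatic_set P0 P1 \<pi>1 \<epsilon> = {Tstar. \<forall>T. 1 \<le> T \<and> Tstar \<le> T \<longrightarrow>
      (\<forall>\<nu>. distribution \<nu> \<longrightarrow> tv_dist (adiabatic_evol P0 P1 T \<nu>) \<pi>1 \<le> \<epsilon>)}"

definition t_ad :: "('n::finite \<Rightarrow> 'n \<Rightarrow> real) \<Rightarrow> ('n \<Rightarrow> 'n \<Rightarrow> real) \<Rightarrow> ('n \<Rightarrow> real) \<Rightarrow> real \<Rightarrow> nat" where
  "t_ad P0 P1 \<pi>1 \<epsilon> = Inf (adiabatic_set P0 P1 \<pi>1 \<epsilon>)"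

end

theory Submission
  imports Defs
begin


definition l1 :: "('n::finite \<Rightarrow> real) \<Rightarrow> real" where
  "l1 w = (\<Sum>i\<in>UNIV. \<bar>w i\<bar>)"

lemma vecmat_matmul: "vecmat \<nu> (matmul A B) = vecmat (vecmat \<nu> A) B"
proof (rule ext)
  fix k
  have "(\<Sum>i\<in>UNIV. \<nu> i * (\<Sum>j\<in>UNIV. A i j * B j k)) = (\<Sum>i\<in>UNIV. \<Sum>j\<in>UNIV. \<nu> i * A i j * B j k)"
    by (simp add: sum_distrib_left mult.assoc)
  also have "\<dots> = (\<Sum>j\<in>UNIV. \<Sum>i\<in>UNIV. \<nu> i * A i j * B j k)" by (rule sum.swap)
  also have "\<dots> = (\<Sum>j\<in>UNIV. (\<Sum>i\<in>UNIV. \<nu> i * A i j) * B j k)"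
    by (simp add: sum_distrib_right)
  finally show "vecmat \<nu> (matmul A B) k = vecmat (vecmat \<nu> A) B k"
    unfolding vecmat_def matmul_def .
qed

lemma delta_sum: "(\<Sum>i\<in>(UNIV::'n::finite set). (if i = x then 1 else 0) * f i) = (f x :: real)"
proof -
  have "\<And>i. (if i = x then 1 else 0) * f i = (if i = x then f i else 0)" by simp
  then show ?thesis by (simp add: sum.delta)
qed

lemma vecmat_id[simp]: "vecmat \<nu> (\<lambda>i j. if i = j then 1 else 0) = \<nu>"
  unfolding vecmat_def using delta_sum[of _ \<nu>] by (simp add: fun_eq_iff mult.commute)

lemma vecmat_matpow_Suc: "vecmat \<nu> (matpow P (Suc k)) = vecmat (vecmat \<nu> (matpow P k)) P"
  by (simp add: vecmat_matmul)

lemma vecmat_matpow_add: "vecmat \<nu> (matpow P (a+b)) = vecmat (vecmat \<nu> (matpow P a)) (matpow P b)"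
  by (induction b) (simp_all add: vecmat_matmul)

lemma matpow_row: "matpow P n i j = vecmat (\<lambda>l. if l = i then 1 else 0) (matpow P n) j"
  unfolding vecmat_def by (rule delta_sum[symmetric])

lemma matpow_entry_add: "matpow P (a+b) i j = (\<Sum>l\<in>UNIV. matpow P a i l * matpow P b l j)"
proof -
  have "matpow P (a+b) i j = vecmat (vecmat (\<lambda>l. if l = i then 1 else 0) (matpow P a)) (matpow P b) j"
    by (subst matpow_row) (simp only: vecmat_matpow_add)
  also have "\<dots> = (\<Sum>l\<in>UNIV. matpow P a i l * matpow P b l j)"
    unfolding vecmat_def[of "vecmat _ _"] by (simp only: matpow_row[symmetric])
  finally show ?thesis .
qed

lemma vecmat_diff: "vecmat (\<lambda>i. a i - b i) P = (\<lambda>j. vecmat a P j - vecmat b P j)"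
  by (simp add: vecmat_def fun_eq_iff left_diff_distrib sum_subtractf)

lemma dist_vecmat: assumes "distribution \<nu>" "stochastic P" shows "distribution (vecmat \<nu> P)"
proof -
  have "(\<Sum>j\<in>UNIV. \<Sum>i\<in>UNIV. \<nu> i * P i j) = (\<Sum>i\<in>UNIV. \<Sum>j\<in>UNIV. \<nu> i * P i j)"
    by (rule sum.swap)
  also have "\<dots> = (\<Sum>i\<in>UNIV. \<nu> i)" by (simp add: sum_distrib_left[symmetric] assms(2)[unfolded stochastic_def])
  finally show ?thesis using assms unfolding distribution_def stochastic_def vecmat_def
    by (auto intro!: sum_nonneg)
qed

lemma dist_matpow: "distribution \<nu> \<Longrightarrow> stochastic P \<Longrightarrow> distribution (vecmat \<nu> (matpow P n))"
  by (induction n) (simp_all add: vecmat_matmul dist_vecmat)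

lemma dist_delta: "distribution (\<lambda>l::'n::finite. if l = i then 1 else 0)"
  by (simp add: distribution_def)

lemma stoch_matpow: assumes "stochastic P" shows "stochastic (matpow P n)"
proof -
  have "distribution (vecmat (\<lambda>l. if l = i then 1 else 0) (matpow P n))" for i
    using dist_matpow[OF dist_delta assms] .
  note h = this
  show ?thesis unfolding stochastic_def
  proof (intro conjI allI)
    fix i j
    show "0 \<le> matpow P n i j" using h[of i] unfolding distribution_def by (subst matpow_row) blast
  next
    fix i
    have "(\<Sum>j\<in>UNIV. matpow P n i j) = (\<Sum>j\<in>UNIV. vecmat (\<lambda>l. if l = i then 1 else 0) (matpow P n) j)"
      by (rule sum.cong) (rule refl, rule matpow_row)
    then show "(\<Sum>j\<in>UNIV. matpow P n i j) = 1" using h[of i] unfolding distribution_def by simp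
  qed
qed

lemma sum_vecmat: assumes "stochastic Q" shows "sum (vecmat w Q) UNIV = sum w UNIV"
proof -
  have "sum (vecmat w Q) UNIV = (\<Sum>i\<in>UNIV. \<Sum>j\<in>UNIV. w i * Q i j)"
    unfolding vecmat_def by (rule sum.swap)
  also have "\<dots> = sum w UNIV" by (simp add: sum_distrib_left[symmetric] assms[unfolded stochastic_def])
  finally show ?thesis .
qed

lemma l1_doeblin:
  fixes Q :: "'n::finite \<Rightarrow> 'n \<Rightarrow> real"
  assumes st: "stochastic Q" and d: "\<And>i j. \<delta> \<le> Q i j" and z: "\<delta> = 0 \<or> sum w UNIV = 0"
  shows "l1 (vecmat w Q) \<le> (1 - real (card (UNIV::'n set)) * \<delta>) * l1 w"
proof -
  have eq: "vecmat w Q j = (\<Sum>i\<in>UNIV. w i * (Q i j - \<delta>))" for j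
  proof -
    have "(\<Sum>i\<in>UNIV. w i * (Q i j - \<delta>)) = (\<Sum>i\<in>UNIV. w i * Q i j - \<delta> * w i)"
      by (rule sum.cong) (simp_all add: algebra_simps)
    also have "\<dots> = vecmat w Q j - \<delta> * sum w UNIV"
      unfolding sum_subtractf vecmat_def sum_distrib_left ..
    finally show ?thesis using z by auto
  qed
  have "l1 (vecmat w Q) \<le> (\<Sum>j\<in>UNIV. \<Sum>i\<in>UNIV. \<bar>w i\<bar> * (Q i j - \<delta>))"
    unfolding l1_def eq
  proof (rule sum_mono)
    fix j
    have "\<bar>\<Sum>i\<in>UNIV. w i * (Q i j - \<delta>)\<bar> \<le> (\<Sum>i\<in>UNIV. \<bar>w i * (Q i j - \<delta>)\<bar>)" by (rule sum_abs)
    also have "\<dots> = (\<Sum>i\<in>UNIV. \<bar>w i\<bar> * (Q i j - \<delta>))"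
      by (rule sum.cong) (use d in \<open>simp_all add: abs_mult\<close>)
    finally show "\<bar>\<Sum>i\<in>UNIV. w i * (Q i j - \<delta>)\<bar> \<le> (\<Sum>i\<in>UNIV. \<bar>w i\<bar> * (Q i j - \<delta>))" .
  qed
  also have "\<dots> = (\<Sum>i\<in>UNIV. \<Sum>j\<in>UNIV. \<bar>w i\<bar> * (Q i j - \<delta>))" by (rule sum.swap)
  also have "\<dots> = (\<Sum>i\<in>UNIV. \<bar>w i\<bar> * (1 - real (card (UNIV::'n set)) * \<delta>))"
  proof (rule sum.cong)
    fix i
    have "(\<Sum>j\<in>UNIV. Q i j - \<delta>) = 1 - real (card (UNIV::'n set)) * \<delta>"
      using st unfolding stochastic_def sum_subtractf by simp
    then show "(\<Sum>j\<in>UNIV. \<bar>w i\<bar> * (Q i j - \<delta>)) = \<bar>w i\<bar> * (1 - real (card (UNIV::'n set)) * \<delta>)"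
      by (simp only: sum_distrib_left[symmetric])
  qed simp
  also have "\<dots> = (1 - real (card (UNIV::'n set)) * \<delta>) * l1 w"
    unfolding l1_def sum_distrib_left by (rule sum.cong) simp_all
  finally show ?thesis .
qed

lemma l1_contract: "stochastic Q \<Longrightarrow> l1 (vecmat w Q) \<le> l1 w"
proof -
  assume st: "stochastic Q"
  then have "\<And>i j. 0 \<le> Q i j" by (simp add: stochastic_def)
  from l1_doeblin[of Q 0 w, OF st this] show ?thesis by simp
qed

lemma tv_l1: "tv_dist a b = l1 (\<lambda>i. a i - b i) / 2"
  by (simp add: tv_dist_def l1_def)

lemma l1_triangle: "l1 (\<lambda>i. a i - c i) \<le> l1 (\<lambda>i. a i - b i) + l1 (\<lambda>i. b i - c i)"
proof -
  have "(\<Sum>i\<in>UNIV. \<bar>a i - c i\<bar>) \<le> (\<Sum>i\<in>UNIV. \<bar>a i - b i\<bar> + \<bar>b i - c i\<bar>)"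
    by (rule sum_mono) (use abs_triangle_ineq[of "a i - b i" "b i - c i" for i] in simp)
  then show ?thesis unfolding l1_def by (simp add: sum.distrib)
qed

lemma l1_dist_le2: "distribution a \<Longrightarrow> distribution b \<Longrightarrow> l1 (\<lambda>i. a i - b i) \<le> 2"
proof -
  assume a: "distribution a" and b: "distribution b"
  have "l1 (\<lambda>i. a i - b i) \<le> (\<Sum>i\<in>UNIV. a i + b i)"
    unfolding l1_def
  proof (intro sum_mono)
    fix i
    have "0 \<le> a i" "0 \<le> b i" using a b by (auto simp: distribution_def)
    then show "\<bar>a i - b i\<bar> \<le> a i + b i" by (simp add: abs_le_iff)
  qed
  also have "\<dots> = 2" using a b by (simp add: sum.distrib distribution_def)
  finally show ?thesis .
qed



lemma semigroup_mult:
  fixes S :: "nat set"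
  assumes add: "\<And>x y. x \<in> S \<Longrightarrow> y \<in> S \<Longrightarrow> x + y \<in> S" and x: "x \<in> S" and k: "1 \<le> k"
  shows "k * x \<in> S"
  using k
proof (induction k)
  case 0 then show ?case by simp
next
  case (Suc k)
  show ?case
  proof (cases "k = 0")
    case True then show ?thesis using x by simp
  next
    case False
    then have "k * x \<in> S" using Suc by simp
    from add[OF x this] show ?thesis by simp
  qed
qed

lemma numerical_semigroup:
  fixes S :: "nat set"
  assumes add: "\<And>x y. x \<in> S \<Longrightarrow> y \<in> S \<Longrightarrow> x + y \<in> S"
    and pos: "\<And>x. x \<in> S \<Longrightarrow> 1 \<le> x"
    and g1: "Gcd S = 1"
  shows "\<exists>N. \<forall>n\<ge>N. n \<in> S"
proof -
  have "S \<noteq> {}" using g1 by auto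
  then obtain s where s: "s \<in> S" by blast
  define D where "D = {d. 0 < d \<and> (\<exists>m\<in>S. \<exists>n\<in>S. m = n + d)}"
  have "s \<in> D" unfolding D_def using s add[OF s s] pos[OF s] by auto
  define g where "g = (LEAST d. d \<in> D)"
  have gD: "g \<in> D" unfolding g_def using \<open>s \<in> D\<close> by (rule LeastI)
  have gmin: "\<And>d. d \<in> D \<Longrightarrow> g \<le> d" unfolding g_def by (rule Least_le)
  from gD obtain m n where mn: "m \<in> S" "n \<in> S" "m = n + g" and g0: "0 < g"
    unfolding D_def by blast
  have dvd: "g dvd x" if xS: "x \<in> S" for x
  proof (rule ccontr)
    assume nd: "\<not> g dvd x"
    define q where "q = x div g"
    define r where "r = x mod g"
    have r0: "0 < r" using nd unfolding r_def by (simp add: dvd_eq_mod_eq_0)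
    have rg: "r < g" unfolding r_def using g0 by simp
    have xqr: "x = q * g + r" unfolding q_def r_def by simp
    have "r \<in> D"
    proof (cases "q = 0")
      case True
      then have e: "x + n = n + r" using xqr by simp
      have "x + n \<in> S" using add[OF xS mn(2)] .
      then show ?thesis unfolding D_def using r0 mn(2) e by blast
    next
      case False
      then have q1: "1 \<le> q" by simp
      have A: "x + q * n \<in> S" using add[OF xS semigroup_mult[OF add mn(2) q1]] .
      have B: "q * m \<in> S" using semigroup_mult[OF add mn(1) q1] .
      have e: "x + q * n = q * m + r" using xqr mn(3) by (simp add: algebra_simps)
      show ?thesis unfolding D_def using r0 A B e by blast
    qed
    then have "g \<le> r" by (rule gmin)
    then show False using rg by simp
  qed
  have "g dvd Gcd S" by (rule Gcd_greatest) (rule dvd)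
  then have g1': "g = 1" using g1 by simp
  have n1: "1 \<le> n" using pos[OF mn(2)] .
  have "\<forall>t\<ge>n*n. t \<in> S"
  proof (intro allI impI)
    fix t assume t: "n * n \<le> t"
    define a where "a = t div n"
    define b where "b = t mod n"
    have bn: "b < n" unfolding b_def using n1 by simp
    have tab: "t = a * n + b" unfolding a_def b_def by simp
    have an: "n \<le> a"
    proof (rule ccontr)
      assume "\<not> n \<le> a"
      then have "a + 1 \<le> n" by simp
      then have "(a + 1) * n \<le> n * n" by (rule mult_right_mono) simp
      moreover have "t < (a + 1) * n" using tab bn by simp
      ultimately show False using t by linarith
    qed
    have ab1: "1 \<le> a - b" using an bn by simp
    have ba: "b \<le> a" using an bn by simp
    have "(a - b) * n + b * n = ((a - b) + b) * n" by (simp only: add_mult_distrib)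
    also have "\<dots> = a * n" using ba by simp
    finally have e1: "(a - b) * n + b * n = a * n" .
    have "b * m = b * n + b" using mn(3) g1' by simp
    then have teq: "t = (a - b) * n + b * m" using tab e1 by simp
    have P1: "(a - b) * n \<in> S" by (rule semigroup_mult[OF add mn(2) ab1])
    show "t \<in> S"
    proof (cases "b = 0")
      case True then show ?thesis using teq P1 by simp
    next
      case False
      then have "b * m \<in> S" using semigroup_mult[OF add mn(1)] by simp
      then show ?thesis using add[OF P1] teq by simp
    qed
  qed
  then show ?thesis by blast
qed



lemma matpow_nonneg: "stochastic P \<Longrightarrow> 0 \<le> matpow P n i j"
  using stoch_matpow[of P n] by (simp add: stochastic_def)

lemma matpow_pos_add:
  assumes st: "stochastic P" and a: "0 < matpow P a i l" and b: "0 < matpow P b l j"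
  shows "0 < matpow P (a+b) i j"
proof -
  have "matpow P a i l * matpow P b l j \<le> (\<Sum>l'\<in>UNIV. matpow P a i l' * matpow P b l' j)"
    by (rule member_le_sum) (simp_all add: matpow_nonneg[OF st])
  moreover have "0 < matpow P a i l * matpow P b l j" using a b by simp
  ultimately show ?thesis by (simp only: matpow_entry_add)
qed

lemma primitive:
  fixes P :: "'n::finite \<Rightarrow> 'n \<Rightarrow> real"
  assumes st: "stochastic P" and irr: "irreducible_chain P" and ap: "aperiodic_chain P"
  shows "\<exists>r. \<forall>i j. 0 < matpow P r i j"
proof -
  have "\<exists>N. \<forall>n\<ge>N. 0 < matpow P n i i" for i
  proof -
    let ?S = "{k. 1 \<le> k \<and> 0 < matpow P k i i}"
    have add: "x + y \<in> ?S" if "x \<in> ?S" "y \<in> ?S" for x y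
      using that matpow_pos_add[OF st, of x i i y i] by simp
    have "Gcd ?S = 1" using ap by (simp add: aperiodic_chain_def)
    from numerical_semigroup[OF add _ this] obtain N where "\<forall>n\<ge>N. n \<in> ?S" by blast
    then show ?thesis by blast
  qed
  then obtain N where N: "\<And>i n. N i \<le> n \<Longrightarrow> 0 < matpow P n i i" by metis
  from irr obtain k where k: "\<And>i j. 0 < matpow P (k i j) i j"
    unfolding irreducible_chain_def by metis
  define M1 where "M1 = Max (range N)"
  define M2 where "M2 = Max (range (\<lambda>(i,j). k i j))"
  have "0 < matpow P (M1 + M2) i j" for i j
  proof -
    have kle: "k i j \<le> M2" unfolding M2_def by (rule Max_ge) auto
    have Nle: "N i \<le> M1" unfolding M1_def by (rule Max_ge) auto
    have "0 < matpow P (M1 + M2 - k i j) i i" using Nle kle by (intro N) simp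
    from matpow_pos_add[OF st this k[of i j]] have "0 < matpow P (M1 + M2 - k i j + k i j) i j" .
    then show ?thesis using kle by simp
  qed
  then show ?thesis by blast
qed

lemma stationary_pow:
  assumes "stationary P \<pi>" shows "vecmat \<pi> (matpow P m) = \<pi>"
  using assms by (induction m) (simp_all add: vecmat_matmul stationary_def)

lemma converge:
  fixes P :: "'n::finite \<Rightarrow> 'n \<Rightarrow> real"
  assumes st: "stochastic P" and irr: "irreducible_chain P" and ap: "aperiodic_chain P"
    and sta: "stationary P \<pi>" and e: "0 < e"
  shows "\<exists>T. \<forall>\<nu>. distribution \<nu> \<longrightarrow> tv_dist (vecmat \<nu> (matpow P T)) \<pi> \<le> e"
proof -
  obtain r where pos: "\<And>i j. 0 < matpow P r i j" using primitive[OF st irr ap] by blast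
  define Q where "Q = matpow P r"
  have stQ: "stochastic Q" unfolding Q_def by (rule stoch_matpow[OF st])
  define \<delta> where "\<delta> = Min (range (\<lambda>(i,j). Q i j))"
  have dle: "\<And>i j. \<delta> \<le> Q i j" unfolding \<delta>_def by (rule Min_le) auto
  have "\<delta> \<in> range (\<lambda>(i,j). Q i j)" unfolding \<delta>_def by (rule Min_in) auto
  then have dpos: "0 < \<delta>" using pos unfolding Q_def by auto
  define c where "c = 1 - real (card (UNIV::'n set)) * \<delta>"
  have cpos: "0 < real (card (UNIV::'n set))" by (simp add: card_gt_0_iff)
  have c1: "c < 1" unfolding c_def using dpos cpos by simp
  have "(\<Sum>j\<in>(UNIV::'n set). \<delta>) \<le> (\<Sum>j\<in>UNIV. Q undefined j)" by (rule sum_mono) (rule dle)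
  then have c0: "0 \<le> c" unfolding c_def using stQ by (simp add: stochastic_def)
  have main: "sum (vecmat w (matpow P (r*k))) UNIV = 0 \<and> l1 (vecmat w (matpow P (r*k))) \<le> c^k * l1 w"
    if w0: "sum w UNIV = 0" for w :: "'n \<Rightarrow> real" and k
  proof (induction k)
    case 0 then show ?case using w0 by simp
  next
    case (Suc k)
    let ?v = "vecmat w (matpow P (r*k))"
    have eq: "vecmat w (matpow P (r * Suc k)) = vecmat ?v Q"
      unfolding Q_def by (simp add: vecmat_matpow_add[symmetric] add.commute)
    have s: "sum (vecmat ?v Q) UNIV = 0" using Suc sum_vecmat[OF stQ] by simp
    have "l1 (vecmat ?v Q) \<le> c * l1 ?v" unfolding c_def
      by (rule l1_doeblin[OF stQ dle]) (use Suc in simp)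
    also have "\<dots> \<le> c * (c^k * l1 w)" using Suc c0 by (simp add: mult_left_mono)
    finally show ?case using s eq by simp
  qed
  obtain k where ck: "c^k < e" using real_arch_pow_inv[OF e c1] by blast
  have "tv_dist (vecmat \<nu> (matpow P (r*k))) \<pi> \<le> e" if nu: "distribution \<nu>" for \<nu>
  proof -
    let ?w = "\<lambda>i. \<nu> i - \<pi> i"
    have sw: "sum ?w UNIV = 0" using nu sta by (simp add: sum_subtractf distribution_def stationary_def)
    have l2: "l1 ?w \<le> 2" using l1_dist_le2[OF nu] sta by (simp add: stationary_def)
    have eqv: "vecmat ?w (matpow P (r*k)) = (\<lambda>i. vecmat \<nu> (matpow P (r*k)) i - \<pi> i)"
      by (simp add: vecmat_diff stationary_pow[OF sta])
    have "l1 (vecmat ?w (matpow P (r*k))) \<le> c^k * l1 ?w" using main[OF sw] by blast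
    also have "\<dots> \<le> c^k * 2" using l2 c0 by (simp add: mult_left_mono)
    finally show ?thesis unfolding tv_l1 eqv[symmetric] using ck by simp
  qed
  then show ?thesis by blast
qed



lemma stoch_interp:
  assumes "stochastic P0" "stochastic P1" "0 \<le> t" "t \<le> 1"
  shows "stochastic (interp P0 P1 t)"
proof -
  have "(\<Sum>j\<in>UNIV. (1 - t) * P0 i j + t * P1 i j) = 1" for i
    using assms by (simp add: sum.distrib sum_distrib_left[symmetric] stochastic_def)
  moreover have "0 \<le> (1 - t) * P0 i j + t * P1 i j" for i j
    using assms by (simp add: stochastic_def)
  ultimately show ?thesis unfolding stochastic_def interp_def by simp
qed

lemma vecmat_interp: "vecmat y (interp P0 P1 t) x = vecmat y P1 x + (1 - t) * (vecmat y P0 x - vecmat y P1 x)"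
proof -
  have "vecmat y (interp P0 P1 t) x = (1 - t) * vecmat y P0 x + t * vecmat y P1 x"
    unfolding vecmat_def interp_def
    by (simp add: distrib_left sum.distrib sum_distrib_left mult.left_commute)
  then show ?thesis by (simp add: algebra_simps)
qed

lemma l1_add_scale: "0 \<le> s \<Longrightarrow> l1 (\<lambda>x. u x + s * v x) \<le> l1 u + s * l1 v"
proof -
  assume s: "0 \<le> s"
  have "(\<Sum>x\<in>UNIV. \<bar>u x + s * v x\<bar>) \<le> (\<Sum>x\<in>UNIV. \<bar>u x\<bar> + s * \<bar>v x\<bar>)"
  proof (rule sum_mono)
    fix x
    have "\<bar>u x + s * v x\<bar> \<le> \<bar>u x\<bar> + \<bar>s * v x\<bar>" by (rule abs_triangle_ineq)
    then show "\<bar>u x + s * v x\<bar> \<le> \<bar>u x\<bar> + s * \<bar>v x\<bar>" using s by (simp add: abs_mult)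
  qed
  then show ?thesis unfolding l1_def by (simp add: sum.distrib sum_distrib_left)
qed

lemma evol_dist:
  assumes "stochastic P0" "stochastic P1" "1 \<le> T" "\<forall>i\<in>set xs. i \<le> T" "distribution \<mu>"
  shows "distribution (foldl (\<lambda>\<mu> i. vecmat \<mu> (interp P0 P1 (real i / real T))) \<mu> xs)"
  using assms(4,5)
proof (induction xs arbitrary: \<mu>)
  case Nil then show ?case by simp
next
  case (Cons a xs)
  have "stochastic (interp P0 P1 (real a / real T))"
    using Cons.prems assms by (intro stoch_interp) (auto simp: divide_le_eq_1)
  then have "distribution (vecmat \<mu> (interp P0 P1 (real a / real T)))"
    using Cons.prems by (intro dist_vecmat)
  then show ?case using Cons by simp
qed

lemma evol_close:
  fixes P0 P1 :: "'n::finite \<Rightarrow> 'n \<Rightarrow> real"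
  assumes s0: "stochastic P0" and s1: "stochastic P1" and T: "1 \<le> T" and mu: "distribution \<mu>"
    and bnd: "\<forall>i\<in>{a..<a+j}. i \<le> T \<and> 1 - real i / real T \<le> c"
  shows "l1 (\<lambda>x. foldl (\<lambda>\<mu> i. vecmat \<mu> (interp P0 P1 (real i / real T))) \<mu> [a..<a+j] x
               - vecmat \<mu> (matpow P1 j) x) \<le> 2 * real j * c"
  using bnd
proof (induction j)
  case 0 then show ?case by (simp add: l1_def)
next
  case (Suc j)
  let ?f = "\<lambda>\<mu> i. vecmat \<mu> (interp P0 P1 (real i / real T))"
  let ?y = "foldl ?f \<mu> [a..<a+j]"
  let ?z = "vecmat \<mu> (matpow P1 j)"
  let ?s = "1 - real (a+j) / real T"
  have IH: "l1 (\<lambda>x. ?y x - ?z x) \<le> 2 * real j * c" using Suc by auto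
  have "a + j \<in> {a..<a + Suc j}" by simp
  then have aj: "a + j \<le> T" "?s \<le> c" using Suc.prems by blast+
  have s0': "0 \<le> ?s" using aj T by (simp add: divide_le_eq_1)
  have ydist: "distribution ?y" using evol_dist[OF s0 s1 T _ mu, of "[a..<a+j]"] aj by auto
  have eq: "(\<lambda>x. foldl ?f \<mu> [a..<a+Suc j] x - vecmat \<mu> (matpow P1 (Suc j)) x)
      = (\<lambda>x. vecmat (\<lambda>x. ?y x - ?z x) P1 x + ?s * (vecmat ?y P0 x - vecmat ?y P1 x))"
    by (simp add: vecmat_matmul vecmat_interp vecmat_diff fun_eq_iff)
  have "l1 (\<lambda>x. vecmat (\<lambda>x. ?y x - ?z x) P1 x + ?s * (vecmat ?y P0 x - vecmat ?y P1 x))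
     \<le> l1 (vecmat (\<lambda>x. ?y x - ?z x) P1) + ?s * l1 (\<lambda>x. vecmat ?y P0 x - vecmat ?y P1 x)"
    by (rule l1_add_scale[OF s0'])
  also have "\<dots> \<le> 2 * real j * c + c * 2"
  proof (rule add_mono)
    show "l1 (vecmat (\<lambda>x. ?y x - ?z x) P1) \<le> 2 * real j * c"
      using l1_contract[OF s1] IH order_trans by blast
    have L: "l1 (\<lambda>x. vecmat ?y P0 x - vecmat ?y P1 x) \<le> 2"
      by (rule l1_dist_le2) (use dist_vecmat ydist s0 s1 in auto)
    show "?s * l1 (\<lambda>x. vecmat ?y P0 x - vecmat ?y P1 x) \<le> c * 2"
    proof (rule mult_mono)
      show "0 \<le> l1 (\<lambda>x. vecmat ?y P0 x - vecmat ?y P1 x)" unfolding l1_def by (rule sum_nonneg) simp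
    qed (use aj(2) s0' L in auto)
  qed
  also have "\<dots> = 2 * real (Suc j) * c" by (simp add: algebra_simps)
  finally show ?case unfolding eq .
qed



theorem proposition1:
  fixes P0 P1 :: "'n::finite \<Rightarrow> 'n \<Rightarrow> real" and \<pi>1 :: "'n \<Rightarrow> real" and \<epsilon> :: real
  assumes "stochastic P0" "irreducible_chain P0" "aperiodic_chain P0"
    and "stochastic P1" "irreducible_chain P1" "aperiodic_chain P1"
    and "stationary P1 \<pi>1"
    and "0 < \<epsilon>"
  shows "adiabatic_set P0 P1 \<pi>1 \<epsilon> \<noteq> {} \<and>
         real (t_ad P0 P1 \<pi>1 \<epsilon>) \<le> 2 * (real (t_mix P1 \<pi>1 (\<epsilon> / 2)))^2 / \<epsilon>"
proof -
  note s0 = assms(1) and s1 = assms(4) and sta = assms(7) and ep = assms(8)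
  define \<tau> where "\<tau> = t_mix P1 \<pi>1 (\<epsilon> / 2)"
  let ?M = "{T. \<forall>\<nu>. distribution \<nu> \<longrightarrow> tv_dist (vecmat \<nu> (matpow P1 T)) \<pi>1 \<le> \<epsilon> / 2}"
  have "?M \<noteq> {}" using converge[OF s1 assms(5,6) sta, of "\<epsilon>/2"] ep by auto
  then have "\<tau> \<in> ?M" unfolding \<tau>_def t_mix_def by (rule Inf_nat_def1)
  then have mix: "\<And>\<nu>. distribution \<nu> \<Longrightarrow> tv_dist (vecmat \<nu> (matpow P1 \<tau>)) \<pi>1 \<le> \<epsilon> / 2" by blast
  define x where "x = 2 * (real \<tau>)^2 / \<epsilon>"
  have x0: "0 \<le> x" unfolding x_def using ep by simp
  define Ts where "Ts = nat \<lfloor>x\<rfloor>"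
  have Tsx: "real Ts \<le> x" unfolding Ts_def using x0 by simp
  have pidist: "distribution \<pi>1" using sta by (simp add: stationary_def)
  let ?f = "\<lambda>\<mu> i. vecmat \<mu> (interp P0 P1 (real i / real T))"
  have good: "tv_dist (adiabatic_evol P0 P1 T \<nu>) \<pi>1 \<le> \<epsilon>"
    if T1: "1 \<le> T" and TT: "Ts \<le> T" and nu: "distribution \<nu>" for T \<nu>
  proof -
    let ?f = "\<lambda>\<mu> i. vecmat \<mu> (interp P0 P1 (real i / real T))"
    have fin: "distribution (adiabatic_evol P0 P1 T \<nu>)"
      unfolding adiabatic_evol_def by (rule evol_dist[OF s0 s1 T1 _ nu]) auto
    have TX: "x - 1 < real T"
    proof -
      have "x - 1 < real_of_int \<lfloor>x\<rfloor>" by linarith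
      also have "\<dots> = real Ts" unfolding Ts_def using x0 by simp
      also have "\<dots> \<le> real T" using TT by simp
      finally show ?thesis .
    qed
    consider (big) "2 \<le> \<epsilon>" | (zero) "\<tau> = 0" | (main) "\<epsilon> < 2" "1 \<le> \<tau>" by linarith
    then show ?thesis
    proof cases
      case big
      have "tv_dist (adiabatic_evol P0 P1 T \<nu>) \<pi>1 \<le> 1"
        using l1_dist_le2[OF fin pidist] by (simp add: tv_l1)
      then show ?thesis using big by simp
    next
      case zero
      then show ?thesis using mix[OF fin] ep by simp
    next
      case main
      have tau2: "real \<tau> \<le> (real \<tau>)^2" using main by (simp add: power2_eq_square)
      have "(real \<tau>)^2 < x" unfolding x_def using main ep
        by (simp add: field_simps power2_eq_square)
      then have "(real \<tau>)^2 - 1 < real T" using TX by linarith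
      then have "real \<tau> < real T + 1" using tau2 by linarith
      then have tauT: "\<tau> \<le> Suc T" by linarith
      define a where "a = Suc T - \<tau>"
      have split: "[0..<Suc T] = [0..<a] @ [a..<a+\<tau>]"
      proof -
        have e: "a + \<tau> = Suc T" using tauT unfolding a_def by simp
        have "[0..<a+\<tau>] = [0..<a] @ [a..<a+\<tau>]" by (rule upt_add_eq_append) simp
        then show ?thesis by (simp only: e)
      qed
      define \<mu> where "\<mu> = foldl ?f \<nu> [0..<a]"
      have mud: "distribution \<mu>" unfolding \<mu>_def
        by (rule evol_dist[OF s0 s1 T1 _ nu]) (auto simp: a_def)
      define c where "c = (real \<tau> - 1) / real T"
      have bnd: "\<forall>i\<in>{a..<a+\<tau>}. i \<le> T \<and> 1 - real i / real T \<le> c"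
      proof
        fix i assume i: "i \<in> {a..<a+\<tau>}"
        then have iT: "i \<le> T" using tauT unfolding a_def by auto
        have "real T - real i \<le> real \<tau> - 1" using i tauT unfolding a_def by auto
        then have "(real T - real i) / real T \<le> c" unfolding c_def
          by (rule divide_right_mono) simp
        moreover have "1 - real i / real T = (real T - real i) / real T" using T1
          by (simp add: diff_divide_distrib)
        ultimately have "1 - real i / real T \<le> c" by simp
        then show "i \<le> T \<and> 1 - real i / real T \<le> c" using iT by simp
      qed
      have fe: "adiabatic_evol P0 P1 T \<nu> = foldl ?f \<mu> [a..<a+\<tau>]"
        unfolding adiabatic_evol_def split \<mu>_def by simp
      have close: "l1 (\<lambda>y. adiabatic_evol P0 P1 T \<nu> y - vecmat \<mu> (matpow P1 \<tau>) y) \<le> 2 * real \<tau> * c"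
        unfolding fe by (rule evol_close[OF s0 s1 T1 mud bnd])
      have key: "2 * real \<tau> * c \<le> \<epsilon>"
      proof -
        have "\<epsilon> * (x - 1) \<le> \<epsilon> * real T" using TX ep by simp
        moreover have "\<epsilon> * (x - 1) = 2 * (real \<tau>)^2 - \<epsilon>" unfolding x_def using ep
          by (simp add: field_simps)
        ultimately have "2 * (real \<tau>)^2 - \<epsilon> \<le> \<epsilon> * real T" by simp
        then have "2 * real \<tau> * (real \<tau> - 1) \<le> \<epsilon> * real T" using main
          by (simp add: power2_eq_square algebra_simps)
        then show ?thesis unfolding c_def using T1 by (simp add: field_simps)
      qed
      have "tv_dist (adiabatic_evol P0 P1 T \<nu>) \<pi>1
          \<le> tv_dist (adiabatic_evol P0 P1 T \<nu>) (vecmat \<mu> (matpow P1 \<tau>)) + tv_dist (vecmat \<mu> (matpow P1 \<tau>)) \<pi>1"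
        unfolding tv_l1 using l1_triangle by (simp add: add_divide_distrib[symmetric] divide_right_mono)
      also have "\<dots> \<le> \<epsilon> / 2 + \<epsilon> / 2"
        using close key mix[OF mud] by (simp add: tv_l1)
      finally show ?thesis by simp
    qed
  qed
  have mem: "Ts \<in> adiabatic_set P0 P1 \<pi>1 \<epsilon>"
    unfolding adiabatic_set_def using good by blast
  have "t_ad P0 P1 \<pi>1 \<epsilon> \<le> Ts"
    unfolding t_ad_def Inf_nat_def by (rule Least_le) (rule mem)
  then have "real (t_ad P0 P1 \<pi>1 \<epsilon>) \<le> x" using Tsx by linarith
  then show ?thesis using mem unfolding x_def \<tau>_def by auto
qed


end
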